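(* Let $\Omega\subset\mathbb{R}^2$ be open, $\lambda>0$, and let $u\in L^2(\Omega)$ satisfy $-\Delta u=\lambda u$ in $\Omega$. Let $\mathbf{x}_0\in\Omega$, $h>0$, $\alpha\in(0,1)$, and let $\mathbf{e}^-,\mathbf{e}^+$ be unit vectors with angle $\alpha\pi$ from $\mathbf{e}^-$ to $\mathbf{e}^+$; put $\Gamma^\pm=\{\mathbf{x}_0+t\mathbf{e}^\pm:0\le t\le h\}\subset\Omega$. Suppose $\Gamma^+$ is a generalized singular line of $u$ with constant parameter $\eta_2\equiv C_2$, and $\Gamma^-$ is a nodal line of $u$ ($u=0$ on $\Gamma^-$). Let $n\in\mathbb{N}$, $n\ge2$. If $\alpha\neq\frac{2q+1}{2p}$ for all integers $p,q$ with $1\le p\le n-1$ and $0\le q\le p-1$, then $u$ vanishes up to the order $n$ at $\mathbf{x}_0$, i.e. all partial derivatives of $u$ of order at most $n-1$ vanish at $\mathbf{x}_0$.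
   Context: No boundary condition is imposed on $\partial\Omega$; $u$ is real-analytic in $\Omega$. A line segment $\Gamma\subset\Omega$ is a generalized singular line with parameter $\eta$ (a complex-valued function not identically zero; here a nonzero complex constant) if $\partial_\nu u+\eta u=0$ on $\Gamma$, $\nu$ a unit normal to $\Gamma$. "Vanishes up to order $n$" means every homogeneous term of degree $<n$ in the Taylor expansion of $u$ at $\mathbf{x}_0$ vanishes. *)

theory Defs
  imports "HOL-Analysis.Analysis"
begin

definition dir_deriv :: "(real \<times> real) \<Rightarrow> (real \<times> real \<Rightarrow> complex) \<Rightarrow> (real \<times> real \<Rightarrow> complex)" where
  "dir_deriv v f = (\<lambda>x. vector_derivative (\<lambda>t. f (x + t *\<^sub>R v)) (at 0))"

definition dx :: "(real \<times> real \<Rightarrow> complex) \<Rightarrow> (real \<times> real \<Rightarrow> complex)" where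
  "dx = dir_deriv (1, 0)"

definition dy :: "(real \<times> real \<Rightarrow> complex) \<Rightarrow> (real \<times> real \<Rightarrow> complex)" where
  "dy = dir_deriv (0, 1)"

definition pderiv2 :: "nat \<Rightarrow> nat \<Rightarrow> (real \<times> real \<Rightarrow> complex) \<Rightarrow> (real \<times> real \<Rightarrow> complex)" where
  "pderiv2 i j f = (dx ^^ i) ((dy ^^ j) f)"

definition smooth_on2 :: "(real \<times> real) set \<Rightarrow> (real \<times> real \<Rightarrow> complex) \<Rightarrow> bool" where
  "smooth_on2 S f \<longleftrightarrow> (\<forall>i j. pderiv2 i j f differentiable_on S)"

definition laplacian :: "(real \<times> real \<Rightarrow> complex) \<Rightarrow> (real \<times> real \<Rightarrow> complex)" where
  "laplacian f = (\<lambda>x. dx (dx f) x + dy (dy f) x)"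

definition rot :: "real \<Rightarrow> real \<times> real \<Rightarrow> real \<times> real" where
  "rot \<theta> v = (cos \<theta> * fst v - sin \<theta> * snd v, sin \<theta> * fst v + cos \<theta> * snd v)"

definition gen_singular_line ::
  "(real \<times> real \<Rightarrow> complex) \<Rightarrow> (real \<times> real) set \<Rightarrow> (real \<times> real) \<Rightarrow> (real \<times> real \<Rightarrow> complex) \<Rightarrow> bool" where
  "gen_singular_line u \<Gamma> \<nu> \<eta> \<longleftrightarrow> (\<forall>x\<in>\<Gamma>. dir_deriv \<nu> u x + \<eta> x * u x = 0)"

definition nodal_line :: "(real \<times> real \<Rightarrow> complex) \<Rightarrow> (real \<times> real) set \<Rightarrow> bool" where
  "nodal_line u \<Gamma> \<longleftrightarrow> (\<forall>x\<in>\<Gamma>. u x = 0)"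

definition vanishes_up_to_order :: "(real \<times> real \<Rightarrow> complex) \<Rightarrow> real \<times> real \<Rightarrow> nat \<Rightarrow> bool" where
  "vanishes_up_to_order u x0 n \<longleftrightarrow> (\<forall>i j. i + j < n \<longrightarrow> pderiv2 i j u x0 = 0)"

end

theory Submission
  imports Defs "HOL-Computational_Algebra.Polynomial"
begin


lemma dd_hasderiv:
  assumes "(f has_derivative F) (at x)"
  shows "dir_deriv v f x = F v"
proof -
  have 1: "((\<lambda>t. x + t *\<^sub>R v) has_derivative (\<lambda>t. t *\<^sub>R v)) (at 0)"
    by (auto intro!: derivative_eq_intros)
  have 2: "(f has_derivative F) (at (x + 0 *\<^sub>R v))" using assms by simp
  have "((\<lambda>t. f (x + t *\<^sub>R v)) has_derivative (\<lambda>t. F (t *\<^sub>R v))) (at 0)"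
    using diff_chain_at[OF 1 2] by (simp add: o_def)
  moreover have "bounded_linear F" using assms has_derivative_bounded_linear by blast
  ultimately have "((\<lambda>t. f (x + t *\<^sub>R v)) has_vector_derivative F v) (at 0)"
    unfolding has_vector_derivative_def by (simp add: linear_simps(5))
  then show ?thesis unfolding dir_deriv_def by (rule vector_derivative_at)
qed

lemma dd_diff:
  assumes "f differentiable (at x)"
  shows "dir_deriv v f x = of_real (fst v) * dx f x + of_real (snd v) * dy f x"
proof -
  obtain F where F: "(f has_derivative F) (at x)" using assms unfolding differentiable_def by blast
  have bl: "bounded_linear F" using F has_derivative_bounded_linear by blast
  have "v = fst v *\<^sub>R (1,0) + snd v *\<^sub>R (0,1)" by (cases v) auto
  then have "F v = fst v *\<^sub>R F (1,0) + snd v *\<^sub>R F (0,1)"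
    by (metis bl linear_simps(1) linear_simps(5))
  then show ?thesis unfolding dx_def dy_def using dd_hasderiv[OF F]
    by (simp add: scaleR_conv_of_real)
qed

lemma dd_local:
  assumes "open S" "x \<in> S" "\<And>y. y \<in> S \<Longrightarrow> f y = g y"
  shows "dir_deriv v f x = dir_deriv v g x"
proof -
  let ?T = "(\<lambda>t::real. x + t *\<^sub>R v) -` S"
  have oT: "open ?T"
    by (rule continuous_open_vimage[OF assms(1)]) (auto intro!: continuous_intros)
  have 0: "0 \<in> ?T" using assms by simp
  have "(\<lambda>D. ((\<lambda>t. f (x + t *\<^sub>R v)) has_vector_derivative D) (at 0)) =
             (\<lambda>D. ((\<lambda>t. g (x + t *\<^sub>R v)) has_vector_derivative D) (at 0))"
  proof (rule ext, rule iffI)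
    fix D assume "((\<lambda>t. f (x + t *\<^sub>R v)) has_vector_derivative D) (at 0)"
    then show "((\<lambda>t. g (x + t *\<^sub>R v)) has_vector_derivative D) (at 0)"
      by (rule has_vector_derivative_transform_within_open[OF _ oT 0]) (simp add: assms(3))
  next
    fix D assume "((\<lambda>t. g (x + t *\<^sub>R v)) has_vector_derivative D) (at 0)"
    then show "((\<lambda>t. f (x + t *\<^sub>R v)) has_vector_derivative D) (at 0)"
      by (rule has_vector_derivative_transform_within_open[OF _ oT 0]) (simp add: assms(3))
  qed
  then show ?thesis unfolding dir_deriv_def vector_derivative_def by (rule arg_cong)
qed

lemma dd_sum:
  assumes "finite I" "\<And>i. i \<in> I \<Longrightarrow> f i differentiable (at x)"
  shows "dir_deriv v (\<lambda>y. \<Sum>i\<in>I. c i * f i y) x = (\<Sum>i\<in>I. c i * dir_deriv v (f i) x)"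
proof -
  have "\<And>i. i \<in> I \<Longrightarrow> (f i has_derivative frechet_derivative (f i) (at x)) (at x)"
    using assms(2) frechet_derivative_works by blast
  then have "((\<lambda>y. \<Sum>i\<in>I. c i * f i y) has_derivative (\<lambda>h. \<Sum>i\<in>I. c i * frechet_derivative (f i) (at x) h)) (at x)"
    by (intro has_derivative_sum has_derivative_mult_right) blast
  then have "dir_deriv v (\<lambda>y. \<Sum>i\<in>I. c i * f i y) x = (\<Sum>i\<in>I. c i * frechet_derivative (f i) (at x) v)"
    by (rule dd_hasderiv)
  also have "\<dots> = (\<Sum>i\<in>I. c i * dir_deriv v (f i) x)"
  proof (rule sum.cong[OF refl])
    fix i assume "i \<in> I"
    then have "(f i has_derivative frechet_derivative (f i) (at x)) (at x)"
      using assms(2) frechet_derivative_works by blast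
    then show "c i * frechet_derivative (f i) (at x) v = c i * dir_deriv v (f i) x"
      by (simp add: dd_hasderiv)
  qed
  finally show ?thesis .
qed

lemma dd_lin2:
  assumes "f differentiable (at x)" "g differentiable (at x)"
  shows "dir_deriv v (\<lambda>y. f y + c * g y) x = dir_deriv v f x + c * dir_deriv v g x"
proof -
  obtain F G where F: "(f has_derivative F) (at x)" and G: "(g has_derivative G) (at x)"
    using assms unfolding differentiable_def by blast
  have "((\<lambda>y. f y + c * g y) has_derivative (\<lambda>h. F h + c * G h)) (at x)"
    using F G by (intro has_derivative_add has_derivative_mult_right)
  then show ?thesis using dd_hasderiv[OF F] dd_hasderiv[OF G] dd_hasderiv by simp
qed

lemma dd_const: "dir_deriv v (\<lambda>_. c) x = 0"
  using dd_hasderiv[of "\<lambda>_. c" "\<lambda>_. 0" x v] by (simp add: has_derivative_const)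



lemma mvt_bound:
  fixes g :: "real \<Rightarrow> complex"
  assumes "h > 0" "\<And>s. s \<in> {0..h} \<Longrightarrow> (g has_derivative (\<lambda>t. t *\<^sub>R g' s)) (at s)"
    "\<And>s. s \<in> {0..h} \<Longrightarrow> cmod (g' s) \<le> M"
  shows "cmod (g h - g 0) \<le> M * h"
proof -
  have cont: "continuous_on {0..h} g"
  proof (rule continuous_at_imp_continuous_on, rule ballI)
    fix x assume "x \<in> {0..h}"
    then show "isCont g x" by (rule has_derivative_continuous[OF assms(2)])
  qed
  have der: "\<And>x. 0 < x \<Longrightarrow> x < h \<Longrightarrow> (g has_derivative (\<lambda>t. t *\<^sub>R g' x)) (at x)"
    using assms(2) by simp
  obtain x where x: "x \<in> {0<..<h}"
    "cmod (g h - g 0) \<le> norm ((\<lambda>t. t *\<^sub>R g' x) (h - 0))"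
    using mvt_general[OF assms(1) cont der] by blast
  have "norm ((h - 0) *\<^sub>R g' x) = h * cmod (g' x)" using assms(1) by simp
  also have "\<dots> \<le> h * M" using assms(3)[of x] x(1) assms(1) by (intro mult_left_mono) auto
  finally show ?thesis using x(2) by (simp add: mult.commute)
qed

lemma line_x:
  assumes "f differentiable (at (p + (s,c)))"
  shows "((\<lambda>s. f (p + (s,c))) has_derivative (\<lambda>t. t *\<^sub>R dx f (p + (s,c)))) (at s)"
proof -
  obtain F where F: "(f has_derivative F) (at (p + (s,c)))"
    using assms unfolding differentiable_def by blast
  have "((\<lambda>s. p + (s,c)) has_derivative (\<lambda>t. 0 + (t,0))) (at s)"
    by (intro has_derivative_add has_derivative_const has_derivative_Pair has_derivative_ident)
  then have 1: "((\<lambda>s. p + (s,c)) has_derivative (\<lambda>t. (t,0))) (at s)" by simp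
  have "((\<lambda>s. f (p + (s,c))) has_derivative (\<lambda>t. F (t,0))) (at s)"
    using diff_chain_at[OF 1 F] by (simp add: o_def)
  moreover have "(\<lambda>t. F (t,0)) = (\<lambda>t. t *\<^sub>R dx f (p + (s,c)))"
  proof (rule ext)
    fix t
    have bl: "bounded_linear F" using F has_derivative_bounded_linear by blast
    have "F (t,0) = F (t *\<^sub>R (1,0))" by simp
    also have "\<dots> = t *\<^sub>R F (1,0)" using bl by (rule linear_simps(5))
    finally show "F (t,0) = t *\<^sub>R dx f (p + (s,c))" unfolding dx_def using dd_hasderiv[OF F] by simp
  qed
  ultimately show ?thesis by (simp only:)
qed

lemma line_y:
  assumes "f differentiable (at (p + (c,s)))"
  shows "((\<lambda>s. f (p + (c,s))) has_derivative (\<lambda>t. t *\<^sub>R dy f (p + (c,s)))) (at s)"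
proof -
  obtain F where F: "(f has_derivative F) (at (p + (c,s)))"
    using assms unfolding differentiable_def by blast
  have "((\<lambda>s. p + (c,s)) has_derivative (\<lambda>t. 0 + (0,t))) (at s)"
    by (intro has_derivative_add has_derivative_const has_derivative_Pair has_derivative_ident)
  then have 1: "((\<lambda>s. p + (c,s)) has_derivative (\<lambda>t. (0,t))) (at s)" by simp
  have "((\<lambda>s. f (p + (c,s))) has_derivative (\<lambda>t. F (0,t))) (at s)"
    using diff_chain_at[OF 1 F] by (simp add: o_def)
  moreover have "(\<lambda>t. F (0,t)) = (\<lambda>t. t *\<^sub>R dy f (p + (c,s)))"
  proof (rule ext)
    fix t
    have bl: "bounded_linear F" using F has_derivative_bounded_linear by blast
    have "F (0,t) = F (t *\<^sub>R (0,1))" by simp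
    also have "\<dots> = t *\<^sub>R F (0,1)" using bl by (rule linear_simps(5))
    finally show "F (0,t) = t *\<^sub>R dy f (p + (c,s))" unfolding dy_def using dd_hasderiv[OF F] by simp
  qed
  ultimately show ?thesis by (simp only:)
qed

lemma lin_scale_deriv:
  "((\<lambda>s::real. complex_of_real (s*h) * A) has_derivative (\<lambda>t. t *\<^sub>R (complex_of_real h * A))) (at s)"
proof -
  have "bounded_linear (\<lambda>s::real. s *\<^sub>R (complex_of_real h * A))"
    by (rule bounded_linear_scaleR_left)
  then have "((\<lambda>s::real. s *\<^sub>R (complex_of_real h * A)) has_derivative (\<lambda>t. t *\<^sub>R (complex_of_real h * A))) (at s)"
    by (rule bounded_linear_imp_has_derivative)
  moreover have "(\<lambda>s::real. s *\<^sub>R (complex_of_real h * A)) = (\<lambda>s. complex_of_real (s*h) * A)"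
    by (auto simp: scaleR_conv_of_real)
  ultimately show ?thesis by simp
qed

lemma pair00: "(0::real, 0::real) = 0" by (simp add: zero_prod_def)



lemma young:
  fixes f :: "real \<times> real \<Rightarrow> complex"
  assumes S: "open S" "p \<in> S" and fd: "\<And>x. x \<in> S \<Longrightarrow> f differentiable (at x)"
    and gx: "dx f differentiable (at p)" and gy: "dy f differentiable (at p)"
  shows "dy (dx f) p = dx (dy f) p"
proof -
  obtain Lx where Lx: "(dx f has_derivative Lx) (at p)" using gx unfolding differentiable_def by blast
  obtain Ly where Ly: "(dy f has_derivative Ly) (at p)" using gy unfolding differentiable_def by blast
  have blx: "bounded_linear Lx" using Lx has_derivative_bounded_linear by blast
  have bly: "bounded_linear Ly" using Ly has_derivative_bounded_linear by blast
  define A where "A = Lx (0,1)"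
  define B where "B = Ly (1,0)"
  have EA: "dy (dx f) p = A" unfolding dy_def A_def by (rule dd_hasderiv[OF Lx])
  have EB: "dx (dy f) p = B" unfolding dx_def B_def by (rule dd_hasderiv[OF Ly])
  have linA: "Lx (s,h) - Lx (s,0) = of_real h * A" for s h
  proof -
    have "Lx (s,h) = Lx ((s,0) + h *\<^sub>R (0,1))" by simp
    also have "\<dots> = Lx (s,0) + Lx (h *\<^sub>R (0,1))" by (rule linear_simps(1)[OF blx])
    also have "\<dots> = Lx (s,0) + h *\<^sub>R Lx (0,1)" by (simp only: linear_simps(5)[OF blx])
    finally show ?thesis unfolding A_def by (simp add: scaleR_conv_of_real)
  qed
  have linB: "Ly (h,s) - Ly (0,s) = of_real h * B" for s h
  proof -
    have "Ly (h,s) = Ly ((0,s) + h *\<^sub>R (1,0))" by simp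
    also have "\<dots> = Ly (0,s) + Ly (h *\<^sub>R (1,0))" by (rule linear_simps(1)[OF bly])
    also have "\<dots> = Ly (0,s) + h *\<^sub>R Ly (1,0)" by (simp only: linear_simps(5)[OF bly])
    finally show ?thesis unfolding B_def by (simp add: scaleR_conv_of_real)
  qed
  have key: "cmod (A - B) \<le> 6 * e" if e: "e > 0" for e
  proof -
    obtain d1 where d1: "d1 > 0" "\<And>y. norm (y - p) < d1 \<Longrightarrow> cmod (dx f y - dx f p - Lx (y - p)) \<le> e * norm (y - p)"
      using Lx e unfolding has_derivative_at_alt by metis
    obtain d2 where d2: "d2 > 0" "\<And>y. norm (y - p) < d2 \<Longrightarrow> cmod (dy f y - dy f p - Ly (y - p)) \<le> e * norm (y - p)"
      using Ly e unfolding has_derivative_at_alt by metis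
    obtain r where r: "r > 0" "ball p r \<subseteq> S" using S open_contains_ball by blast
    define h where "h = min (min d1 d2) r / 4"
    have h: "h > 0" "2*h < d1" "2*h < d2" "2*h < r" using d1 d2 r unfolding h_def by auto
    have nrm: "norm ((a,b)::real\<times>real) \<le> 2*h" if "0 \<le> a" "a \<le> h" "0 \<le> b" "b \<le> h" for a b
      using norm_Pair_le[of a b] that by simp
    have inS: "p + (a,b) \<in> S" if "0 \<le> a" "a \<le> h" "0 \<le> b" "b \<le> h" for a b
    proof -
      have "dist (p + (a,b)) p < r" using nrm[OF that] h by (simp add: dist_norm)
      then have "p + (a,b) \<in> ball p r" by (simp add: dist_commute)
      then show ?thesis using r by auto
    qed
    define \<Delta> where "\<Delta> = f (p + (h,h)) - f (p + (h,0)) - f (p + (0,h)) + f p"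
    have c1: "cmod (\<Delta> - of_real (h*h) * A) \<le> 3*e*h * h"
    proof -
      define g where "g s = f (p + (s,h)) - f (p + (s,0)) - of_real (s*h) * A" for s
      define g' where "g' s = dx f (p + (s,h)) - dx f (p + (s,0)) - of_real h * A" for s
      have "cmod (g h - g 0) \<le> 3*e*h * h"
      proof (rule mvt_bound[OF h(1)])
        fix s :: real assume s: "s \<in> {0..h}"
        have 1: "((\<lambda>s. f (p + (s,h))) has_derivative (\<lambda>t. t *\<^sub>R dx f (p + (s,h)))) (at s)"
          using s h by (intro line_x fd inS) auto
        have 2: "((\<lambda>s. f (p + (s,0))) has_derivative (\<lambda>t. t *\<^sub>R dx f (p + (s,0)))) (at s)"
          using s h by (intro line_x fd inS) auto
        have 3: "(g has_derivative (\<lambda>t. t *\<^sub>R dx f (p + (s,h)) - t *\<^sub>R dx f (p + (s,0)) - t *\<^sub>R (of_real h * A))) (at s)"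
          unfolding g_def[abs_def] by (intro has_derivative_diff 1 2 lin_scale_deriv)
        have "(\<lambda>t. t *\<^sub>R dx f (p + (s,h)) - t *\<^sub>R dx f (p + (s,0)) - t *\<^sub>R (of_real h * A)) = (\<lambda>t. t *\<^sub>R g' s)"
          unfolding g'_def by (simp add: scaleR_diff_right)
        then show "(g has_derivative (\<lambda>t. t *\<^sub>R g' s)) (at s)" using 3 by (simp only:)
      next
        fix s :: real assume s: "s \<in> {0..h}"
        have n1: "norm (s,h) \<le> 2*h" using nrm[of s h] s h by auto
        have n2: "norm (s,0) \<le> h" using s by simp
        have b1: "cmod (dx f (p + (s,h)) - dx f p - Lx (s,h)) \<le> e * norm (s,h)"
          using d1(2)[of "p + (s,h)"] n1 h by simp
        have b2: "cmod (dx f (p + (s,0)) - dx f p - Lx (s,0)) \<le> e * norm (s,0)"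
          using d1(2)[of "p + (s,0)"] n2 h by simp
        have geq: "g' s = (dx f (p + (s,h)) - dx f p - Lx (s,h)) - (dx f (p + (s,0)) - dx f p - Lx (s,0))"
          unfolding g'_def using linA[of s h] by (simp add: algebra_simps)
        have "cmod (g' s) \<le> cmod (dx f (p + (s,h)) - dx f p - Lx (s,h)) + cmod (dx f (p + (s,0)) - dx f p - Lx (s,0))"
          unfolding geq by (rule norm_triangle_ineq4)
        also have "\<dots> \<le> e * norm (s,h) + e * norm (s,0::real)" by (rule add_mono[OF b1 b2])
        also have "\<dots> \<le> e * (2*h) + e * h"
          using n1 n2 e by (intro add_mono mult_left_mono) auto
        finally show "cmod (g' s) \<le> 3*e*h" by simp
      qed
      moreover have "g h - g 0 = \<Delta> - of_real (h*h) * A" unfolding g_def \<Delta>_def by (simp add: pair00)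
      ultimately show ?thesis by simp
    qed
    have c2: "cmod (\<Delta> - of_real (h*h) * B) \<le> 3*e*h * h"
    proof -
      define g where "g s = f (p + (h,s)) - f (p + (0,s)) - of_real (s*h) * B" for s
      define g' where "g' s = dy f (p + (h,s)) - dy f (p + (0,s)) - of_real h * B" for s
      have "cmod (g h - g 0) \<le> 3*e*h * h"
      proof (rule mvt_bound[OF h(1)])
        fix s :: real assume s: "s \<in> {0..h}"
        have 1: "((\<lambda>s. f (p + (h,s))) has_derivative (\<lambda>t. t *\<^sub>R dy f (p + (h,s)))) (at s)"
          using s h by (intro line_y fd inS) auto
        have 2: "((\<lambda>s. f (p + (0,s))) has_derivative (\<lambda>t. t *\<^sub>R dy f (p + (0,s)))) (at s)"
          using s h by (intro line_y fd inS) auto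
        have 3: "(g has_derivative (\<lambda>t. t *\<^sub>R dy f (p + (h,s)) - t *\<^sub>R dy f (p + (0,s)) - t *\<^sub>R (of_real h * B))) (at s)"
          unfolding g_def[abs_def] by (intro has_derivative_diff 1 2 lin_scale_deriv)
        have "(\<lambda>t. t *\<^sub>R dy f (p + (h,s)) - t *\<^sub>R dy f (p + (0,s)) - t *\<^sub>R (of_real h * B)) = (\<lambda>t. t *\<^sub>R g' s)"
          unfolding g'_def by (simp add: scaleR_diff_right)
        then show "(g has_derivative (\<lambda>t. t *\<^sub>R g' s)) (at s)" using 3 by (simp only:)
      next
        fix s :: real assume s: "s \<in> {0..h}"
        have n1: "norm (h,s) \<le> 2*h" using nrm[of h s] s h by auto
        have n2: "norm (0,s) \<le> h" using s by simp
        have b1: "cmod (dy f (p + (h,s)) - dy f p - Ly (h,s)) \<le> e * norm (h,s)"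
          using d2(2)[of "p + (h,s)"] n1 h by simp
        have b2: "cmod (dy f (p + (0,s)) - dy f p - Ly (0,s)) \<le> e * norm (0,s)"
          using d2(2)[of "p + (0,s)"] n2 h by simp
        have geq: "g' s = (dy f (p + (h,s)) - dy f p - Ly (h,s)) - (dy f (p + (0,s)) - dy f p - Ly (0,s))"
          unfolding g'_def using linB[of h s] by (simp add: algebra_simps)
        have "cmod (g' s) \<le> cmod (dy f (p + (h,s)) - dy f p - Ly (h,s)) + cmod (dy f (p + (0,s)) - dy f p - Ly (0,s))"
          unfolding geq by (rule norm_triangle_ineq4)
        also have "\<dots> \<le> e * norm (h,s) + e * norm (0::real,s)" by (rule add_mono[OF b1 b2])
        also have "\<dots> \<le> e * (2*h) + e * h"
          using n1 n2 e by (intro add_mono mult_left_mono) auto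
        finally show "cmod (g' s) \<le> 3*e*h" by simp
      qed
      moreover have "g h - g 0 = \<Delta> - of_real (h*h) * B" unfolding g_def \<Delta>_def by (simp add: pair00 algebra_simps)
      ultimately show ?thesis by simp
    qed
    have eq: "of_real (h*h) * (A - B) = (\<Delta> - of_real (h*h) * B) - (\<Delta> - of_real (h*h) * A)"
      by (simp add: algebra_simps)
    have "cmod (of_real (h*h) * (A - B)) \<le> cmod (\<Delta> - of_real (h*h) * B) + cmod (\<Delta> - of_real (h*h) * A)"
      unfolding eq by (rule norm_triangle_ineq4)
    also have "\<dots> \<le> 3*e*h * h + 3*e*h * h" by (rule add_mono[OF c2 c1])
    finally have "cmod (of_real (h*h) * (A - B)) \<le> 3*e*h * h + 3*e*h * h" .
    moreover have "cmod (of_real (h*h) * (A - B)) = (h*h) * cmod (A - B)"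
      using h(1) by (simp add: norm_mult abs_of_pos)
    moreover have "3*e*h * h + 3*e*h * h = (h*h) * (6 * e)" by (simp add: algebra_simps)
    ultimately have "(h*h) * cmod (A - B) \<le> (h*h) * (6 * e)" by simp
    then show ?thesis using h(1) by (simp add: mult_le_cancel_left_pos)
  qed
  have "A = B"
  proof (rule ccontr)
    assume "A \<noteq> B" then have pos: "cmod (A-B) > 0" by simp
    from key[of "cmod (A-B)/12"] pos show False by simp
  qed
  then show ?thesis using EA EB by simp
qed



lemma diff_transfer:
  assumes "open S" "\<And>x. x \<in> S \<Longrightarrow> f x = g x" "g differentiable_on S"
  shows "f differentiable_on S"
proof -
  have "f differentiable (at x)" if x: "x \<in> S" for x
  proof -
    from assms(3) x assms(1) have "g differentiable (at x)"
      by (simp add: differentiable_on_eq_differentiable_at)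
    then obtain G where G: "(g has_derivative G) (at x)" unfolding differentiable_def by blast
    have "(f has_derivative G) (at x)"
      by (rule has_derivative_transform_within_open[OF G assms(1) x]) (simp add: assms(2))
    then show ?thesis unfolding differentiable_def by blast
  qed
  then show ?thesis using assms(1) by (simp add: differentiable_on_eq_differentiable_at)
qed

lemma smooth_at:
  assumes "open S" "smooth_on2 S u" "x \<in> S"
  shows "pderiv2 i j u differentiable (at x)"
  using assms unfolding smooth_on2_def by (simp add: differentiable_on_eq_differentiable_at)

lemma pd_Suc_x: "pderiv2 (Suc i) j f = dx (pderiv2 i j f)"
  by (simp add: pderiv2_def)

lemma pd_0_Suc: "pderiv2 0 (Suc j) f = dy (pderiv2 0 j f)"
  by (simp add: pderiv2_def)

lemma pd_00: "pderiv2 0 0 f = f"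
  by (simp add: pderiv2_def)

lemma iter_local:
  assumes "open S" "\<And>x. x \<in> S \<Longrightarrow> f x = g x"
  shows "x \<in> S \<Longrightarrow> ((dir_deriv v) ^^ k) f x = ((dir_deriv v) ^^ k) g x"
proof (induction k arbitrary: x)
  case 0 then show ?case using assms by simp
next
  case (Suc k)
  show ?case using dd_local[OF assms(1) Suc.prems Suc.IH] by simp
qed

lemma commute_dy:
  assumes S: "open S" and sm: "smooth_on2 S u"
  shows "x \<in> S \<Longrightarrow> dy (pderiv2 i j u) x = pderiv2 i (Suc j) u x"
proof (induction i arbitrary: j x)
  case 0 then show ?case by (simp add: pderiv2_def)
next
  case (Suc i)
  let ?g = "pderiv2 i j u"
  have fd: "\<And>y. y \<in> S \<Longrightarrow> ?g differentiable (at y)" using smooth_at[OF S sm] by blast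
  have gx: "dx ?g differentiable (at x)" using smooth_at[OF S sm Suc.prems, of "Suc i" j] by (simp add: pd_Suc_x)
  have "dy ?g differentiable_on S"
    by (rule diff_transfer[OF S, of _ "pderiv2 i (Suc j) u"]) (use Suc.IH sm in \<open>auto simp: smooth_on2_def\<close>)
  then have gy: "dy ?g differentiable (at x)" using S Suc.prems by (simp add: differentiable_on_eq_differentiable_at)
  have "dy (pderiv2 (Suc i) j u) x = dy (dx ?g) x" by (simp add: pd_Suc_x)
  also have "\<dots> = dx (dy ?g) x" by (rule young[OF S Suc.prems fd gx gy])
  also have "\<dots> = dx (pderiv2 i (Suc j) u) x"
    unfolding dx_def by (rule dd_local[OF S Suc.prems]) (rule Suc.IH)
  also have "\<dots> = pderiv2 (Suc i) (Suc j) u x" by (simp add: pd_Suc_x)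
  finally show ?case .
qed

lemma iter_lin:
  assumes S: "open S" and H: "\<And>x. x \<in> S \<Longrightarrow> H x = f x + c * g x"
    and df: "\<And>k x. x \<in> S \<Longrightarrow> ((dir_deriv v) ^^ k) f differentiable (at x)"
    and dg: "\<And>k x. x \<in> S \<Longrightarrow> ((dir_deriv v) ^^ k) g differentiable (at x)"
  shows "x \<in> S \<Longrightarrow> ((dir_deriv v) ^^ k) H x = ((dir_deriv v) ^^ k) f x + c * ((dir_deriv v) ^^ k) g x"
proof (induction k arbitrary: x)
  case 0 then show ?case using H by simp
next
  case (Suc k)
  have "((dir_deriv v) ^^ Suc k) H x = dir_deriv v (((dir_deriv v) ^^ k) H) x" by simp
  also have "\<dots> = dir_deriv v (\<lambda>y. ((dir_deriv v) ^^ k) f y + c * ((dir_deriv v) ^^ k) g y) x"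
    by (rule dd_local[OF S Suc.prems]) (rule Suc.IH)
  also have "\<dots> = dir_deriv v (((dir_deriv v) ^^ k) f) x + c * dir_deriv v (((dir_deriv v) ^^ k) g) x"
    by (rule dd_lin2[OF df[OF Suc.prems] dg[OF Suc.prems]])
  finally show ?case by simp
qed

lemma dd_zero_fun: "((dir_deriv v) ^^ k) (\<lambda>_. 0) = (\<lambda>_. 0)"
proof (induction k)
  case 0 then show ?case by simp
next
  case (Suc k) then show ?case by (simp add: dd_const)
qed

lemma pd_lin:
  assumes S: "open S" and sf: "smooth_on2 S f" and sg: "smooth_on2 S g"
    and H: "\<And>x. x \<in> S \<Longrightarrow> H x = f x + c * g x"
  shows "x \<in> S \<Longrightarrow> pderiv2 i j H x = pderiv2 i j f x + c * pderiv2 i j g x"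
proof -
  assume x: "x \<in> S"
  have dfy: "((dir_deriv (0,1)) ^^ k) f differentiable (at y)" if "y \<in> S" for k y
    using smooth_at[OF S sf that, of 0 k] by (simp add: pderiv2_def dy_def)
  have dgy: "((dir_deriv (0,1)) ^^ k) g differentiable (at y)" if "y \<in> S" for k y
    using smooth_at[OF S sg that, of 0 k] by (simp add: pderiv2_def dy_def)
  have dfx: "((dir_deriv (1,0)) ^^ k) ((dy ^^ j) f) differentiable (at y)" if "y \<in> S" for k y
    using smooth_at[OF S sf that, of k j] by (simp add: pderiv2_def dx_def)
  have dgx: "((dir_deriv (1,0)) ^^ k) ((dy ^^ j) g) differentiable (at y)" if "y \<in> S" for k y
    using smooth_at[OF S sg that, of k j] by (simp add: pderiv2_def dx_def)
  have 1: "\<And>y. y \<in> S \<Longrightarrow> (dy ^^ j) H y = (dy ^^ j) f y + c * (dy ^^ j) g y"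
    unfolding dy_def by (rule iter_lin[OF S H dfy dgy])
  show ?thesis unfolding pderiv2_def dx_def
    by (rule iter_lin[OF S 1 dfx dgx x])
qed

lemma smooth_transfer:
  assumes S: "open S" and sf: "smooth_on2 S f" and sg: "smooth_on2 S g"
    and H: "\<And>x. x \<in> S \<Longrightarrow> H x = f x + c * g x"
  shows "smooth_on2 S H"
  unfolding smooth_on2_def
proof (intro allI)
  fix i j
  show "pderiv2 i j H differentiable_on S"
  proof (rule diff_transfer[OF S pd_lin[OF S sf sg H]])
    show "(\<lambda>x. pderiv2 i j f x + c * pderiv2 i j g x) differentiable_on S"
      using sf sg unfolding smooth_on2_def by (intro differentiable_on_add differentiable_on_mult differentiable_on_const) auto
  qed
qed



definition Ek :: "(real \<times> real \<Rightarrow> complex) \<Rightarrow> nat \<Rightarrow> complex poly \<Rightarrow> real \<times> real \<Rightarrow> complex" where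
  "Ek u m p = (\<lambda>x. \<Sum>i\<le>m. coeff p i * pderiv2 i (m-i) u x)"

lemma diff_lincomb:
  fixes f :: "'i \<Rightarrow> real \<times> real \<Rightarrow> complex"
  assumes "finite I" "\<And>i. i \<in> I \<Longrightarrow> f i differentiable (at x)"
  shows "(\<lambda>y. \<Sum>i\<in>I. c i * f i y) differentiable (at x)"
proof -
  have "\<And>i. i \<in> I \<Longrightarrow> (f i has_derivative frechet_derivative (f i) (at x)) (at x)"
    using assms(2) frechet_derivative_works by blast
  then have "((\<lambda>y. \<Sum>i\<in>I. c i * f i y) has_derivative (\<lambda>h. \<Sum>i\<in>I. c i * frechet_derivative (f i) (at x) h)) (at x)"
    by (intro has_derivative_sum has_derivative_mult_right) blast
  then show ?thesis unfolding differentiable_def by blast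
qed

lemma Ek_diff:
  assumes "open S" "smooth_on2 S u" "x \<in> S"
  shows "Ek u m p differentiable (at x)"
  unfolding Ek_def by (rule diff_lincomb) (auto intro: smooth_at[OF assms])

lemma Ek_diff_on:
  assumes "open S" "smooth_on2 S u"
  shows "Ek u m p differentiable_on S"
  using Ek_diff[OF assms] assms(1) by (simp add: differentiable_on_eq_differentiable_at)

lemma Ek_0_1: "Ek u 0 1 x = u x"
  by (simp add: Ek_def pd_00)

lemma poly_lin_mult: "p * [:b, a:] = smult b p + pCons 0 (smult a p)"
  by (simp add: mult_pCons_right)

lemma degree_lin: "degree [:b, a:] \<le> 1"
  by (rule order_trans[OF degree_pCons_le]) simp

lemma Ek_dd:
  assumes S: "open S" and sm: "smooth_on2 S u" and x: "x \<in> S" and dp: "degree p \<le> m"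
  shows "dir_deriv v (Ek u m p) x = Ek u (Suc m) (p * [:of_real (snd v), of_real (fst v):]) x"
proof -
  let ?a = "complex_of_real (fst v)" and ?b = "complex_of_real (snd v)"
  let ?pd = "\<lambda>i j. pderiv2 i j u x"
  have "dir_deriv v (Ek u m p) x = (\<Sum>i\<le>m. coeff p i * dir_deriv v (pderiv2 i (m-i) u) x)"
    unfolding Ek_def by (rule dd_sum) (auto intro: smooth_at[OF S sm x])
  also have "\<dots> = (\<Sum>i\<le>m. coeff p i * (?a * ?pd (Suc i) (m-i) + ?b * ?pd i (Suc (m-i))))"
  proof (rule sum.cong[OF refl])
    fix i assume "i \<in> {..m}"
    have "dir_deriv v (pderiv2 i (m-i) u) x = ?a * dx (pderiv2 i (m-i) u) x + ?b * dy (pderiv2 i (m-i) u) x"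
      by (rule dd_diff[OF smooth_at[OF S sm x]])
    also have "\<dots> = ?a * ?pd (Suc i) (m-i) + ?b * ?pd i (Suc (m-i))"
      by (simp add: pd_Suc_x commute_dy[OF S sm x])
    finally show "coeff p i * dir_deriv v (pderiv2 i (m-i) u) x = coeff p i * (?a * ?pd (Suc i) (m-i) + ?b * ?pd i (Suc (m-i)))"
      by simp
  qed
  also have "\<dots> = (\<Sum>i\<le>m. ?b * coeff p i * ?pd i (Suc (m-i))) + (\<Sum>i\<le>m. ?a * coeff p i * ?pd (Suc i) (m-i))"
    by (simp add: sum.distrib algebra_simps)
  also have "\<dots> = Ek u (Suc m) (p * [:?b, ?a:]) x"
  proof -
    have cS: "coeff p (Suc m) = 0" using dp by (simp add: coeff_eq_0)
    have "Ek u (Suc m) (p * [:?b, ?a:]) x =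
      (\<Sum>i\<le>Suc m. ?b * coeff p i * ?pd i (Suc m - i)) + (\<Sum>i\<le>Suc m. coeff (pCons 0 (smult ?a p)) i * ?pd i (Suc m - i))"
      unfolding Ek_def poly_lin_mult by (simp add: sum.distrib algebra_simps)
    also have "(\<Sum>i\<le>Suc m. ?b * coeff p i * ?pd i (Suc m - i)) = (\<Sum>i\<le>m. ?b * coeff p i * ?pd i (Suc (m-i)))"
    proof -
      have "(\<Sum>i\<le>Suc m. ?b * coeff p i * ?pd i (Suc m - i)) = (\<Sum>i\<le>m. ?b * coeff p i * ?pd i (Suc m - i))"
        by (simp add: cS)
      also have "\<dots> = (\<Sum>i\<le>m. ?b * coeff p i * ?pd i (Suc (m-i)))"
        by (rule sum.cong[OF refl]) (simp add: Suc_diff_le)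
      finally show ?thesis .
    qed
    also have "(\<Sum>i\<le>Suc m. coeff (pCons 0 (smult ?a p)) i * ?pd i (Suc m - i)) = (\<Sum>i\<le>m. ?a * coeff p i * ?pd (Suc i) (m-i))"
      by (subst sum.atMost_Suc_shift) simp
    finally show ?thesis by simp
  qed
  finally show ?thesis .
qed

lemma degree_Ek_poly: "degree (p0 * [:b, a:] ^ k) \<le> degree p0 + k"
proof -
  have "degree ([:b, a:] ^ k) \<le> degree [:b, a:] * k" by (rule degree_power_le)
  also have "\<dots> \<le> 1 * k" using degree_lin by (intro mult_right_mono) auto
  finally have "degree ([:b, a:] ^ k) \<le> k" by simp
  then show ?thesis using degree_mult_le[of p0 "[:b, a:] ^ k"] by linarith
qed

lemma Ek_iter:
  assumes S: "open S" and sm: "smooth_on2 S u" and f: "\<And>x. x \<in> S \<Longrightarrow> f x = Ek u m0 p0 x"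
    and dp: "degree p0 \<le> m0"
  shows "x \<in> S \<Longrightarrow> ((dir_deriv v) ^^ k) f x =
           Ek u (m0 + k) (p0 * [:of_real (snd v), of_real (fst v):] ^ k) x"
proof (induction k arbitrary: x)
  case 0 then show ?case using f by simp
next
  case (Suc k)
  let ?l = "[:complex_of_real (snd v), complex_of_real (fst v):]"
  have dq: "degree (p0 * ?l ^ k) \<le> m0 + k" using degree_Ek_poly[of p0 _ _ k] dp by (meson add_right_mono order_trans)
  have "((dir_deriv v) ^^ Suc k) f x = dir_deriv v (((dir_deriv v) ^^ k) f) x" by simp
  also have "\<dots> = dir_deriv v (Ek u (m0 + k) (p0 * ?l ^ k)) x"
    by (rule dd_local[OF S Suc.prems]) (rule Suc.IH)
  also have "\<dots> = Ek u (Suc (m0 + k)) (p0 * ?l ^ k * ?l) x"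
    by (rule Ek_dd[OF S sm Suc.prems dq])
  also have "\<dots> = Ek u (m0 + Suc k) (p0 * ?l ^ Suc k) x"
    by (simp only: power_Suc2 mult.assoc add_Suc_right)
  finally show ?case .
qed

lemma Ek_zero_at:
  assumes "\<And>i j. i + j < k \<Longrightarrow> pderiv2 i j u x0 = 0" "m < k"
  shows "Ek u m p x0 = 0"
  unfolding Ek_def using assms by (intro sum.neutral) auto



lemma seg_step:
  assumes h: "h > 0" and z: "\<And>t. t \<in> {0..<h} \<Longrightarrow> F (x0 + t *\<^sub>R e) = 0"
    and d: "\<And>t. t \<in> {0..<h} \<Longrightarrow> F differentiable (at (x0 + t *\<^sub>R e))"
    and t: "t \<in> {0..<h}"
  shows "dir_deriv e F (x0 + t *\<^sub>R e) = 0"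
proof -
  define y where "y = x0 + t *\<^sub>R e"
  define \<phi> where "\<phi> = (\<lambda>s::real. F (y + s *\<^sub>R e))"
  have l: "((\<lambda>s::real. y + s *\<^sub>R e) has_derivative (\<lambda>s. 0 + s *\<^sub>R e)) (at 0)"
    by (intro has_derivative_add has_derivative_const has_derivative_scaleR_left has_derivative_ident)
  then have ld: "(\<lambda>s::real. y + s *\<^sub>R e) differentiable (at 0)" unfolding differentiable_def by blast
  have Fd: "F differentiable (at ((\<lambda>s::real. y + s *\<^sub>R e) 0))" using d[OF t] unfolding y_def by simp
  have "(F \<circ> (\<lambda>s::real. y + s *\<^sub>R e)) differentiable (at 0)"
    by (rule differentiable_chain_at[OF ld Fd])
  then have "\<phi> differentiable (at 0)" unfolding \<phi>_def by (simp add: o_def)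
  then have "(\<phi> has_vector_derivative vector_derivative \<phi> (at 0)) (at 0)"
    by (simp add: vector_derivative_works)
  moreover have "vector_derivative \<phi> (at 0) = dir_deriv e F y"
    unfolding \<phi>_def dir_deriv_def by simp
  ultimately have D: "(\<phi> has_vector_derivative dir_deriv e F y) (at 0)" by simp
  define c where "c = (h - t) / 2"
  have c: "c > 0" using t unfolding c_def by auto
  have D1: "(\<phi> has_vector_derivative dir_deriv e F y) (at 0 within {0..c})"
    by (rule has_vector_derivative_at_within[OF D])
  have D2: "(\<phi> has_vector_derivative 0) (at 0 within {0..c})"
  proof (rule has_vector_derivative_transform[of 0 "{0..c}" \<phi> "\<lambda>_. 0"])
    show "(0::real) \<in> {0..c}" using c by simp
    fix s assume s: "s \<in> {0..c}"
    have "y + s *\<^sub>R e = x0 + (t + s) *\<^sub>R e" unfolding y_def by (simp add: algebra_simps)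
    moreover have "t + s \<in> {0..<h}" using s t unfolding c_def by auto
    ultimately show "\<phi> s = 0" unfolding \<phi>_def using z by simp
  next
    show "((\<lambda>_. 0) has_vector_derivative 0) (at 0 within {0..c})" by (rule has_vector_derivative_const)
  qed
  have nb: "at (0::real) within {0..c} \<noteq> bot"
    using at_within_Icc_at_right[OF c] trivial_limit_at_right_real by simp
  have "dir_deriv e F y = 0" by (rule vector_derivative_unique_within[OF nb D1 D2])
  then show ?thesis unfolding y_def .
qed

lemma seg_iter:
  assumes h: "h > 0" and z: "\<And>t. t \<in> {0..<h} \<Longrightarrow> F (x0 + t *\<^sub>R e) = 0"
    and d: "\<And>k t. t \<in> {0..<h} \<Longrightarrow> ((dir_deriv e) ^^ k) F differentiable (at (x0 + t *\<^sub>R e))"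
  shows "t \<in> {0..<h} \<Longrightarrow> ((dir_deriv e) ^^ k) F (x0 + t *\<^sub>R e) = 0"
proof (induction k arbitrary: t)
  case 0 then show ?case using z by simp
next
  case (Suc k)
  show ?case using seg_step[OF h Suc.IH d Suc.prems] by simp
qed

lemma seg_mem:
  assumes "h > 0" "0 \<le> t" "t \<le> h"
  shows "x0 + t *\<^sub>R e \<in> closed_segment x0 (x0 + h *\<^sub>R e)"
proof -
  have "x0 + t *\<^sub>R e = (1 - t/h) *\<^sub>R x0 + (t/h) *\<^sub>R (x0 + h *\<^sub>R e)"
    using assms(1) by (simp add: algebra_simps)
  moreover have "0 \<le> t/h" "t/h \<le> 1" using assms by auto
  ultimately show ?thesis unfolding in_segment by blast
qed

lemma lap_rel:
  assumes S: "open S" and sm: "smooth_on2 S u"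
    and hz: "\<forall>x\<in>S. - laplacian u x = complex_of_real lam * u x" and x: "x \<in> S"
  shows "pderiv2 (i+2) j u x + pderiv2 i (j+2) u x + of_real lam * pderiv2 i j u x = 0"
proof -
  have com: "(dy ^^ j') (pderiv2 i0 0 u) y = pderiv2 i0 j' u y" if "y \<in> S" for j' i0 y
    using that
  proof (induction j' arbitrary: y)
    case 0 then show ?case by simp
  next
    case (Suc j')
    have "(dy ^^ Suc j') (pderiv2 i0 0 u) y = dy ((dy ^^ j') (pderiv2 i0 0 u)) y" by simp
    also have "\<dots> = dy (pderiv2 i0 j' u) y"
      unfolding dy_def by (rule dd_local[OF S Suc.prems]) (rule Suc.IH[unfolded dy_def])
    also have "\<dots> = pderiv2 i0 (Suc j') u y" by (rule commute_dy[OF S sm Suc.prems])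
    finally show ?case .
  qed
  have pd20: "pderiv2 i' j' (pderiv2 2 0 u) y = pderiv2 (i'+2) j' u y" if "y \<in> S" for i' j' y
  proof -
    have "pderiv2 i' j' (pderiv2 2 0 u) y = (dx ^^ i') ((dy ^^ j') (pderiv2 2 0 u)) y"
      by (simp add: pderiv2_def)
    also have "\<dots> = (dx ^^ i') (pderiv2 2 j' u) y"
      unfolding dx_def by (rule iter_local[OF S com that])
    also have "\<dots> = pderiv2 (i'+2) j' u y" by (simp only: pderiv2_def funpow_add o_apply)
    finally show ?thesis .
  qed
  have pd02: "pderiv2 i' j' (pderiv2 0 2 u) = pderiv2 i' (j'+2) u" for i' j'
    by (simp only: pderiv2_def funpow_add o_apply funpow_0)
  have sm20: "smooth_on2 S (pderiv2 2 0 u)"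
    unfolding smooth_on2_def
  proof (intro allI)
    fix i' j'
    show "pderiv2 i' j' (pderiv2 2 0 u) differentiable_on S"
      by (rule diff_transfer[OF S pd20]) (use sm in \<open>auto simp: smooth_on2_def\<close>)
  qed
  have sm02: "smooth_on2 S (pderiv2 0 2 u)"
    using sm unfolding smooth_on2_def pd02 by blast
  define H1 where "H1 = (\<lambda>y. pderiv2 0 2 u y + of_real lam * u y)"
  have smH1: "smooth_on2 S H1" by (rule smooth_transfer[OF S sm02 sm, where c="of_real lam"]) (simp add: H1_def)
  define W where "W = (\<lambda>y. pderiv2 2 0 u y + 1 * H1 y)"
  have W0: "W y = 0" if "y \<in> S" for y
  proof -
    have "laplacian u y = pderiv2 2 0 u y + pderiv2 0 2 u y"
      by (simp add: laplacian_def pderiv2_def numeral_2_eq_2)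
    moreover have "- laplacian u y = of_real lam * u y" using hz that by blast
    ultimately have "of_real lam * u y = - (pderiv2 2 0 u y + pderiv2 0 2 u y)" by simp
    then show ?thesis unfolding W_def H1_def by simp
  qed
  have "pderiv2 i j W x = pderiv2 i j (pderiv2 2 0 u) x + 1 * pderiv2 i j H1 x"
    by (rule pd_lin[OF S sm20 smH1 _ x]) (simp add: W_def)
  also have "pderiv2 i j H1 x = pderiv2 i j (pderiv2 0 2 u) x + of_real lam * pderiv2 i j u x"
    by (rule pd_lin[OF S sm02 sm _ x]) (simp add: H1_def)
  finally have e1: "pderiv2 i j W x = pderiv2 (i+2) j u x + pderiv2 i (j+2) u x + of_real lam * pderiv2 i j u x"
    using pd20[OF x] pd02 by simp
  have dyW: "(dy ^^ j) W y = 0" if "y \<in> S" for y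
  proof -
    have "(dy ^^ j) W y = (dy ^^ j) (\<lambda>_. 0) y" unfolding dy_def by (rule iter_local[OF S W0 that])
    then show ?thesis unfolding dy_def by (simp add: dd_zero_fun)
  qed
  have "pderiv2 i j W x = (dx ^^ i) (\<lambda>_. 0) x"
    unfolding pderiv2_def dx_def by (rule iter_local[OF S dyW x])
  then have "pderiv2 i j W x = 0" unfolding dx_def by (simp add: dd_zero_fun)
  then show ?thesis using e1 by simp
qed



lemma closed_form:
  fixes a :: "nat \<Rightarrow> complex"
  assumes rec: "\<And>i. i + 2 \<le> k \<Longrightarrow> a (i+2) = - a i"
  shows "i \<le> k \<Longrightarrow> a i = (a 0 - \<i> * a 1) / 2 * \<i>^i + (a 0 + \<i> * a 1) / 2 * (-\<i>)^i"
proof (induction i rule: less_induct)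
  case (less i)
  show ?case
  proof (cases i)
    case 0 then show ?thesis by (simp add: field_simps)
  next
    case (Suc j)
    show ?thesis
    proof (cases j)
      case 0 then show ?thesis using Suc by (simp add: field_simps)
    next
      case (Suc l)
      have il: "i = l + 2" using Suc \<open>i = Suc j\<close> by simp
      have "a i = - a l" using rec[of l] less.prems il by simp
      also have "a l = (a 0 - \<i> * a 1) / 2 * \<i>^l + (a 0 + \<i> * a 1) / 2 * (-\<i>)^l"
        using less.IH[of l] less.prems il by simp
      finally show ?thesis using il by (simp add: power_add)
    qed
  qed
qed

lemma poly_sum_k:
  fixes p :: "complex poly"
  assumes "degree p \<le> k"
  shows "poly p z = (\<Sum>i\<le>k. coeff p i * z^i)"
proof -
  have "poly p z = (\<Sum>i\<le>degree p. coeff p i * z^i)" by (rule poly_altdef)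
  also have "\<dots> = (\<Sum>i\<le>k. coeff p i * z^i)"
    by (rule sum.mono_neutral_left) (use assms in \<open>auto simp: coeff_eq_0\<close>)
  finally show ?thesis .
qed

lemma alg_key:
  fixes e1 e2 n1 n2 \<theta> :: real and P Q :: complex and k :: nat
  defines "f1 \<equiv> cos \<theta> * e1 - sin \<theta> * e2" and "f2 \<equiv> sin \<theta> * e1 + cos \<theta> * e2"
  assumes k: "k \<ge> 1" and he: "e1^2 + e2^2 = 1" and hn: "n1^2 + n2^2 = 1"
    and orth: "n1 * f1 + n2 * f2 = 0" and cs: "cos (real k * \<theta>) \<noteq> 0"
    and nod: "P * poly ([:of_real e2, of_real e1:]^k) \<i> + Q * poly ([:of_real e2, of_real e1:]^k) (-\<i>) = 0"
    and sing: "P * poly ([:of_real n2, of_real n1:] * [:of_real f2, of_real f1:]^(k-1)) \<i>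
             + Q * poly ([:of_real n2, of_real n1:] * [:of_real f2, of_real f1:]^(k-1)) (-\<i>) = 0"
  shows "P = 0 \<and> Q = 0"
proof -
  define W where "W = complex_of_real e2 + \<i> * complex_of_real e1"
  define Wc where "Wc = complex_of_real e2 - \<i> * complex_of_real e1"
  define \<omega> where "\<omega> = cis \<theta>"
  define \<omega>c where "\<omega>c = cis (-\<theta>)"
  have hf: "f1^2 + f2^2 = 1"
    using sin_cos_squared_add[of \<theta>] he unfolding f1_def f2_def by algebra
  define \<sigma> where "\<sigma> = n2 * f1 - n1 * f2"
  have n1e: "n1 = - \<sigma> * f2"
  proof -
    have "- \<sigma> * f2 = n1 * (f1^2 + f2^2) - f1 * (n1 * f1 + n2 * f2)"
      unfolding \<sigma>_def by (simp add: power2_eq_square algebra_simps)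
    then show ?thesis using hf orth by simp
  qed
  have n2e: "n2 = \<sigma> * f1"
  proof -
    have "\<sigma> * f1 = n2 * (f1^2 + f2^2) - f2 * (n1 * f1 + n2 * f2)"
      unfolding \<sigma>_def by (simp add: power2_eq_square algebra_simps)
    then show ?thesis using hf orth by simp
  qed
  have s2: "\<sigma>^2 = 1"
  proof -
    have "(n1^2 + n2^2) * (f1^2 + f2^2) = (n1 * f1 + n2 * f2)^2 + \<sigma>^2"
      unfolding \<sigma>_def by (simp add: power2_eq_square algebra_simps)
    then show ?thesis using hf hn orth by simp
  qed
  then have s0: "\<sigma> \<noteq> 0" by auto
  have pe1: "poly [:complex_of_real f2, complex_of_real f1:] \<i> = \<omega>c * W"
    unfolding \<omega>c_def W_def f1_def f2_def by (simp add: complex_eq_iff cis.code algebra_simps)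
  have pe2: "poly [:complex_of_real f2, complex_of_real f1:] (-\<i>) = \<omega> * Wc"
    unfolding \<omega>_def Wc_def f1_def f2_def by (simp add: complex_eq_iff cis.code algebra_simps)
  have pn1: "poly [:complex_of_real n2, complex_of_real n1:] \<i> = - \<i> * of_real \<sigma> * (\<omega>c * W)"
  proof -
    have "poly [:complex_of_real n2, complex_of_real n1:] \<i> = - \<i> * of_real \<sigma> * poly [:complex_of_real f2, complex_of_real f1:] \<i>"
      by (simp add: n1e n2e complex_eq_iff algebra_simps)
    then show ?thesis using pe1 by simp
  qed
  have pn2: "poly [:complex_of_real n2, complex_of_real n1:] (-\<i>) = \<i> * of_real \<sigma> * (\<omega> * Wc)"
  proof -
    have "poly [:complex_of_real n2, complex_of_real n1:] (-\<i>) = \<i> * of_real \<sigma> * poly [:complex_of_real f2, complex_of_real f1:] (-\<i>)"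
      by (simp add: n1e n2e complex_eq_iff algebra_simps)
    then show ?thesis using pe2 by simp
  qed
  have kk: "k = Suc (k - 1)" using k by simp
  have sing2: "- \<i> * of_real \<sigma> * (P * (\<omega>c * W)^k) + \<i> * of_real \<sigma> * (Q * (\<omega> * Wc)^k) = 0"
  proof -
    have "(\<omega>c * W)^k = (\<omega>c * W) * (\<omega>c * W)^(k-1)" "(\<omega> * Wc)^k = (\<omega> * Wc) * (\<omega> * Wc)^(k-1)"
      by (subst kk, simp)+
    then show ?thesis using sing unfolding poly_mult poly_power pn1 pn2 pe1 pe2
      by (simp add: algebra_simps)
  qed
  have sing3: "- (P * (\<omega>c * W)^k) + Q * (\<omega> * Wc)^k = 0"
  proof -
    have "\<i> * of_real \<sigma> * (- (P * (\<omega>c * W)^k) + Q * (\<omega> * Wc)^k) = 0"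
      using sing2 by (simp add: algebra_simps)
    then show ?thesis using s0 by simp
  qed
  have nod2: "P * W^k + Q * Wc^k = 0"
    using nod unfolding poly_power W_def Wc_def by (simp add: algebra_simps)
  define A where "A = P * W^k"
  define B where "B = Q * Wc^k"
  have AB: "A = - B" using nod2 unfolding A_def B_def by (simp add: eq_neg_iff_add_eq_0)
  have "- (\<omega>c^k * A) + \<omega>^k * B = 0"
    using sing3 unfolding A_def B_def by (simp add: power_mult_distrib algebra_simps)
  then have "(\<omega>^k + \<omega>c^k) * B = 0" using AB by (simp add: algebra_simps)
  moreover have "\<omega>^k + \<omega>c^k = 2 * of_real (cos (real k * \<theta>))"
    unfolding \<omega>_def \<omega>c_def Complex.DeMoivre by (simp add: complex_eq_iff cis.code)
  ultimately have B0: "B = 0" using cs by simp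
  then have A0: "A = 0" using AB by simp
  have W0: "W \<noteq> 0"
  proof
    assume "W = 0"
    then have "e2 = 0" "e1 = 0" unfolding W_def by (simp_all add: complex_eq_iff)
    then show False using he by simp
  qed
  have Wc0: "Wc \<noteq> 0"
  proof
    assume "Wc = 0"
    then have "e2 = 0" "e1 = 0" unfolding Wc_def by (simp_all add: complex_eq_iff)
    then show False using he by simp
  qed
  show ?thesis using A0 B0 W0 Wc0 unfolding A_def B_def by simp
qed



theorem theorem3p5:
  fixes \<Omega> :: "(real \<times> real) set" and u :: "real \<times> real \<Rightarrow> complex"
    and lam h \<alpha> :: real and x0 em ep \<nu> :: "real \<times> real" and C2 :: complex and n :: nat
  assumes "open \<Omega>" and "lam > 0"
    and smooth: "smooth_on2 \<Omega> u"
    and L2: "(\<lambda>x. (cmod (u x))\<^sup>2) integrable_on \<Omega>"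
    and helmholtz: "\<forall>x\<in>\<Omega>. - laplacian u x = complex_of_real lam * u x"
    and "x0 \<in> \<Omega>" and "h > 0" and "0 < \<alpha>" and "\<alpha> < 1"
    and "norm em = 1" and "ep = rot (\<alpha> * pi) em"
    and "closed_segment x0 (x0 + h *\<^sub>R ep) \<subseteq> \<Omega>"
    and "closed_segment x0 (x0 + h *\<^sub>R em) \<subseteq> \<Omega>"
    and "norm \<nu> = 1" and "\<nu> \<bullet> ep = 0"
    and "C2 \<noteq> 0"
    and "gen_singular_line u (closed_segment x0 (x0 + h *\<^sub>R ep)) \<nu> (\<lambda>_. C2)"
    and "nodal_line u (closed_segment x0 (x0 + h *\<^sub>R em))"
    and "n \<ge> 2"
    and "\<forall>p q :: int. 1 \<le> p \<and> p \<le> int n - 1 \<and> 0 \<le> q \<and> q \<le> p - 1 \<longrightarrow>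
           \<alpha> \<noteq> real_of_int (2 * q + 1) / real_of_int (2 * p)"
  shows "vanishes_up_to_order u x0 n"
proof -
  note S = assms(1) and x0 = assms(6) and hpos = assms(7) and a0 = assms(8) and a1 = assms(9)
  note segp = assms(12) and segm = assms(13) and sing = assms(17) and nod = assms(18)
  note acond = assms(20)
  obtain e1 e2 where em: "em = (e1, e2)" by (cases em)
  obtain n1 n2 where nu: "\<nu> = (n1, n2)" by (cases \<nu>)
  define \<theta> where "\<theta> = \<alpha> * pi"
  define f1 where "f1 = cos \<theta> * e1 - sin \<theta> * e2"
  define f2 where "f2 = sin \<theta> * e1 + cos \<theta> * e2"
  have ep: "ep = (f1, f2)" using assms(11) unfolding rot_def em f1_def f2_def \<theta>_def by simp
  have he: "e1^2 + e2^2 = 1"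
  proof -
    have "sqrt (e1^2 + e2^2) = 1" using assms(10) unfolding em by (simp add: norm_Pair)
    then show ?thesis by simp
  qed
  have hn: "n1^2 + n2^2 = 1"
  proof -
    have "sqrt (n1^2 + n2^2) = 1" using assms(14) unfolding nu by (simp add: norm_Pair)
    then show ?thesis by simp
  qed
  have orth: "n1 * f1 + n2 * f2 = 0" using assms(15) unfolding nu ep by simp
  define pm where "pm = [:complex_of_real e2, complex_of_real e1:]"
  define pe where "pe = [:complex_of_real f2, complex_of_real f1:]"
  define pn where "pn = [:complex_of_real n2, complex_of_real n1:]"
  have u_Ek: "\<And>x. x \<in> \<Omega> \<Longrightarrow> u x = Ek u 0 1 x" by (simp add: Ek_0_1)
  have Du: "((dir_deriv v) ^^ k) u x = Ek u k ([:complex_of_real (snd v), complex_of_real (fst v):] ^ k) x"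
    if "x \<in> \<Omega>" for v k x
    using Ek_iter[OF S smooth u_Ek _ that, where v=v and k=k] by simp
  have Du_diff: "((dir_deriv v) ^^ k) u differentiable (at x)" if "x \<in> \<Omega>" for v k x
  proof -
    have "((dir_deriv v) ^^ k) u differentiable_on \<Omega>"
      by (rule diff_transfer[OF S Du Ek_diff_on[OF S smooth]])
    then show ?thesis using S that by (simp add: differentiable_on_eq_differentiable_at)
  qed
  have Dnu0: "dir_deriv \<nu> u x = Ek u 1 pn x" if "x \<in> \<Omega>" for x
  proof -
    have "dir_deriv \<nu> u x = dir_deriv \<nu> (Ek u 0 1) x" by (rule dd_local[OF S that u_Ek])
    also have "\<dots> = Ek u (Suc 0) (1 * pn) x"
      using Ek_dd[OF S smooth that, where p=1 and m=0 and v=\<nu>] unfolding pn_def nu by simp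
    finally show ?thesis by simp
  qed
  have dpn: "degree pn \<le> 1" unfolding pn_def by (rule degree_lin)
  have Dnu: "((dir_deriv ep) ^^ k) (dir_deriv \<nu> u) x = Ek u (1 + k) (pn * pe ^ k) x"
    if "x \<in> \<Omega>" for k x
    using Ek_iter[OF S smooth Dnu0 dpn that, where v=ep and k=k] unfolding pe_def ep by simp
  have Dnu_diff: "((dir_deriv ep) ^^ k) (dir_deriv \<nu> u) differentiable (at x)" if "x \<in> \<Omega>" for k x
  proof -
    have "((dir_deriv ep) ^^ k) (dir_deriv \<nu> u) differentiable_on \<Omega>"
      by (rule diff_transfer[OF S Dnu Ek_diff_on[OF S smooth]])
    then show ?thesis using S that by (simp add: differentiable_on_eq_differentiable_at)
  qed
  define F1 where "F1 = (\<lambda>x. dir_deriv \<nu> u x + C2 * u x)"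
  have DF1: "((dir_deriv ep) ^^ k) F1 x = ((dir_deriv ep) ^^ k) (dir_deriv \<nu> u) x + C2 * ((dir_deriv ep) ^^ k) u x"
    if "x \<in> \<Omega>" for k x
    by (rule iter_lin[OF S _ Dnu_diff Du_diff that]) (simp add: F1_def)
  have DF1_diff: "((dir_deriv ep) ^^ k) F1 differentiable (at x)" if "x \<in> \<Omega>" for k x
  proof -
    have "((dir_deriv ep) ^^ k) F1 differentiable_on \<Omega>"
    proof (rule diff_transfer[OF S DF1])
      have "((dir_deriv ep) ^^ k) (dir_deriv \<nu> u) differentiable_on \<Omega>"
        using Dnu_diff S by (simp add: differentiable_on_eq_differentiable_at)
      moreover have "((dir_deriv ep) ^^ k) u differentiable_on \<Omega>"
        using Du_diff S by (simp add: differentiable_on_eq_differentiable_at)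
      ultimately show "(\<lambda>x. ((dir_deriv ep) ^^ k) (dir_deriv \<nu> u) x + C2 * ((dir_deriv ep) ^^ k) u x) differentiable_on \<Omega>"
        by (intro differentiable_on_add differentiable_on_mult differentiable_on_const) auto
    qed
    then show ?thesis using S that by (simp add: differentiable_on_eq_differentiable_at)
  qed
  have segm_in: "x0 + t *\<^sub>R em \<in> \<Omega>" if "t \<in> {0..<h}" for t
    using seg_mem[OF hpos, of t x0 em] that segm by auto
  have segp_in: "x0 + t *\<^sub>R ep \<in> \<Omega>" if "t \<in> {0..<h}" for t
    using seg_mem[OF hpos, of t x0 ep] that segp by auto
  have nodK: "((dir_deriv em) ^^ k) u x0 = 0" for k
  proof -
    have "((dir_deriv em) ^^ k) u (x0 + 0 *\<^sub>R em) = 0"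
    proof (rule seg_iter[OF hpos])
      show "u (x0 + t *\<^sub>R em) = 0" if "t \<in> {0..<h}" for t
        using nod seg_mem[OF hpos, of t x0 em] that unfolding nodal_line_def by auto
      show "((dir_deriv em) ^^ k') u differentiable (at (x0 + t *\<^sub>R em))" if "t \<in> {0..<h}" for k' t
        by (rule Du_diff[OF segm_in[OF that]])
      show "(0::real) \<in> {0..<h}" using hpos by simp
    qed
    then show ?thesis by simp
  qed
  have singK: "((dir_deriv ep) ^^ k) F1 x0 = 0" for k
  proof -
    have "((dir_deriv ep) ^^ k) F1 (x0 + 0 *\<^sub>R ep) = 0"
    proof (rule seg_iter[OF hpos])
      show "F1 (x0 + t *\<^sub>R ep) = 0" if "t \<in> {0..<h}" for t
        using sing seg_mem[OF hpos, of t x0 ep] that unfolding gen_singular_line_def F1_def by auto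
      show "((dir_deriv ep) ^^ k') F1 differentiable (at (x0 + t *\<^sub>R ep))" if "t \<in> {0..<h}" for k' t
        by (rule DF1_diff[OF segp_in[OF that]])
      show "(0::real) \<in> {0..<h}" using hpos by simp
    qed
    then show ?thesis by simp
  qed
  have main: "k < n \<longrightarrow> (\<forall>i j. i + j \<le> k \<longrightarrow> pderiv2 i j u x0 = 0)" for k
  proof (induction k)
    case 0
    have "u x0 = 0" using nod seg_mem[OF hpos, of 0 x0 em] hpos unfolding nodal_line_def by auto
    then show ?case by (simp add: pd_00)
  next
    case (Suc k)
    show ?case
    proof (intro impI allI)
      fix i j assume K: "Suc k < n" and ij: "i + j \<le> Suc k"
      define K where "K = Suc k"
      have IH: "\<And>i j. i + j < K \<Longrightarrow> pderiv2 i j u x0 = 0" using Suc.IH K unfolding K_def by auto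
      define a where "a i = pderiv2 i (K - i) u x0" for i
      have rec: "a (i+2) = - a i" if "i + 2 \<le> K" for i
      proof -
        have "pderiv2 (i+2) (K-i-2) u x0 + pderiv2 i (K-i-2+2) u x0 + of_real lam * pderiv2 i (K-i-2) u x0 = 0"
          by (rule lap_rel[OF S smooth helmholtz x0])
        moreover have "pderiv2 i (K-i-2) u x0 = 0" using IH[of i "K-i-2"] that by simp
        moreover have "K-i-2+2 = K - i" "K - (i+2) = K-i-2" using that by auto
        ultimately show ?thesis unfolding a_def by (simp add: eq_neg_iff_add_eq_0)
      qed
      define P where "P = (a 0 - \<i> * a 1) / 2"
      define Q where "Q = (a 0 + \<i> * a 1) / 2"
      have cf: "a i = P * \<i>^i + Q * (-\<i>)^i" if "i \<le> K" for i
        unfolding P_def Q_def by (rule closed_form[where a=a and k=K, OF rec that])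
      have Ev: "Ek u K p x0 = P * poly p \<i> + Q * poly p (-\<i>)" if "degree p \<le> K" for p
      proof -
        have "Ek u K p x0 = (\<Sum>i\<le>K. coeff p i * (P * \<i>^i + Q * (-\<i>)^i))"
          unfolding Ek_def using cf unfolding a_def by (intro sum.cong) auto
        also have "\<dots> = P * (\<Sum>i\<le>K. coeff p i * \<i>^i) + Q * (\<Sum>i\<le>K. coeff p i * (-\<i>)^i)"
          by (simp add: sum.distrib sum_distrib_left algebra_simps)
        also have "\<dots> = P * poly p \<i> + Q * poly p (-\<i>)"
          using poly_sum_k[OF that] by simp
        finally show ?thesis .
      qed
      have dK: "degree (pm ^ K) \<le> K" using degree_Ek_poly[of 1 _ _ K] unfolding pm_def by simp
      have E1: "P * poly (pm ^ K) \<i> + Q * poly (pm ^ K) (-\<i>) = 0"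
      proof -
        have "Ek u K (pm ^ K) x0 = 0" using nodK[of K] Du[OF x0, where v=em and k=K] unfolding pm_def em by simp
        then show ?thesis using Ev[OF dK] by simp
      qed
      have K1: "1 + (K - 1) = K" "K \<ge> 1" unfolding K_def by auto
      have dK2: "degree (pn * pe ^ (K-1)) \<le> K"
      proof -
        have "degree (pn * pe ^ (K-1)) \<le> degree pn + (K-1)" unfolding pe_def by (rule degree_Ek_poly)
        then show ?thesis using dpn K1 by linarith
      qed
      have E2: "P * poly (pn * pe ^ (K-1)) \<i> + Q * poly (pn * pe ^ (K-1)) (-\<i>) = 0"
      proof -
        have "0 = ((dir_deriv ep) ^^ (K-1)) F1 x0" using singK by simp
        also have "\<dots> = Ek u (1 + (K-1)) (pn * pe ^ (K-1)) x0 + C2 * ((dir_deriv ep) ^^ (K-1)) u x0"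
          using DF1[OF x0] Dnu[OF x0] by simp
        also have "((dir_deriv ep) ^^ (K-1)) u x0 = 0"
          using Du[OF x0, where v=ep and k="K-1"] Ek_zero_at[where k=K and m="K-1", OF IH] K1 by simp
        finally have "Ek u K (pn * pe ^ (K-1)) x0 = 0" using K1 by simp
        then show ?thesis using Ev[OF dK2] by simp
      qed
      have cs: "cos (real K * \<theta>) \<noteq> 0"
      proof
        assume "cos (real K * \<theta>) = 0"
        then obtain i where i: "odd i" "real K * \<theta> = real_of_int i * (pi / 2)"
          using cos_zero_iff_int by blast
        obtain q where q: "i = 2 * q + 1" using i(1) by (metis oddE)
        have Kpos: "real K > 0" using K1 by simp
        have al: "\<alpha> = real_of_int (2 * q + 1) / real_of_int (2 * int K)"
        proof -
          have "real K * \<alpha> * pi = real_of_int i * pi / 2" using i(2) unfolding \<theta>_def by (simp add: algebra_simps)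
          then have "real K * \<alpha> = real_of_int i / 2" by (simp add: field_simps)
          then show ?thesis using Kpos q by (simp add: field_simps)
        qed
        have "real_of_int (2 * q + 1) > 0"
        proof -
          have "real_of_int (2 * q + 1) = \<alpha> * (2 * real K)" using al Kpos by (simp add: field_simps)
          then show ?thesis using a0 Kpos by simp
        qed
        then have q0: "0 \<le> q" by simp
        have "real_of_int (2 * q + 1) < 2 * real K"
        proof -
          have "real_of_int (2 * q + 1) = \<alpha> * (2 * real K)" using al Kpos by (simp add: field_simps)
          then show ?thesis using a1 Kpos by simp
        qed
        then have q1: "q \<le> int K - 1" by linarith
        have "1 \<le> int K" "int K \<le> int n - 1" using K1 K unfolding K_def by auto
        then have "\<alpha> \<noteq> real_of_int (2 * q + 1) / real_of_int (2 * int K)"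
          using acond q0 q1 by blast
        then show False using al by simp
      qed
      have PQ: "P = 0 \<and> Q = 0"
      proof (rule alg_key[OF K1(2) he hn])
        show "n1 * (cos \<theta> * e1 - sin \<theta> * e2) + n2 * (sin \<theta> * e1 + cos \<theta> * e2) = 0"
          using orth unfolding f1_def f2_def .
        show "cos (real K * \<theta>) \<noteq> 0" by (rule cs)
        show "P * poly ([:complex_of_real e2, complex_of_real e1:] ^ K) \<i> +
              Q * poly ([:complex_of_real e2, complex_of_real e1:] ^ K) (- \<i>) = 0"
          using E1 unfolding pm_def .
        show "P * poly ([:complex_of_real n2, complex_of_real n1:] *
                  [:complex_of_real (sin \<theta> * e1 + cos \<theta> * e2), complex_of_real (cos \<theta> * e1 - sin \<theta> * e2):] ^ (K - 1)) \<i> +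
              Q * poly ([:complex_of_real n2, complex_of_real n1:] *
                  [:complex_of_real (sin \<theta> * e1 + cos \<theta> * e2), complex_of_real (cos \<theta> * e1 - sin \<theta> * e2):] ^ (K - 1)) (- \<i>) = 0"
          using E2 unfolding pn_def pe_def f1_def f2_def .
      qed
      have a0all: "a i' = 0" if "i' \<le> K" for i'
        using cf[OF that] PQ by simp
      show "pderiv2 i j u x0 = 0"
      proof (cases "i + j < K")
        case True then show ?thesis by (rule IH)
      next
        case False
        then have "j = K - i" "i \<le> K" using ij unfolding K_def by auto
        then show ?thesis using a0all[of i] unfolding a_def by simp
      qed
    qed
  qed
  show ?thesis unfolding vanishes_up_to_order_def
  proof (intro allI impI)
    fix i j assume "i + j < n"
    then show "pderiv2 i j u x0 = 0" using main[of "n - 1"] assms(19) by auto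
  qed
qed


end
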